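(* Let $X=\Gamma\backslash G$ be a compact 2-step nilmanifold with abelian invariant complex structure $J$, and suppose the center $\mathfrak c$ of $\mathfrak g$ has complex dimension $1$ (real dimension $2$). Suppose that every direction of the virtual parameter space $H^1(X,\Theta_X)$ integrates to a 1-parameter family of abelian complex structures; precisely, suppose every $\overline\partial$-closed $\mu\in\mathfrak g^{*(0,1)}\otimes\mathfrak g^{1,0}$ generates an abelian deformation. Then $\mathfrak g$ is isomorphic to $\mathfrak h_{2n+1}\oplus\mathbb R$, the direct sum of the $(2n+1)$-dimensional Heisenberg algebra and the 1-dimensional abelian algebra, where $\dim_{\mathbb R}\mathfrak g=2n+2$ (with the convention $\mathfrak h_1=\mathbb R$).
   Context: $\mathfrak g$ is the Lie algebra of the simply connected group $G$, real 2-step nilpotent, with abelian complex structure $J$ ($J^2=-1$, $[JA,JB]=[A,B]$ for all $A,B$); $\Gamma$ is discrete co-compact; $\Theta_X$ the holomorphic tangent sheaf of $X$. $\mathfrak t$ is a $J$-invariant complement of $\mathfrak c$ with real basis $\{X_j,JX_j\}_{1\le j\le n}$; $\{Z,JZ\}$ a real basis of $\mathfrak c$; $T_j=\frac12(X_j-iJX_j)$, $W=\frac12(Z-iJZ)$ a basis of $\mathfrak g^{1,0}$; $[\overline T_k,T_j]=E_{kj}W+F_{kj}\overline W$ with $F_{kj}=-\overline{E_{jk}}$. $\{\omega^p\}$ is the dual $(1,0)$-basis, $\mathfrak g^{*(0,1)}=\mathrm{span}\{\overline\omega^p\}$, and elements of $\mathfrak g^{*(0,1)}\otimes\mathfrak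 g^{1,0}$ are viewed as maps $\mathfrak g^{0,1}\to\mathfrak g^{1,0}$. $\overline\partial$ on $\mathfrak g^{*(0,1)}\otimes\mathfrak g^{1,0}$: $\overline\partial V=\sum_p\overline\omega^p\otimes[\overline e_p,V]^{1,0}$ for $V\in\mathfrak g^{1,0}$, $\overline\partial\overline\sigma=(d\overline\sigma)^{(0,2)}$, $\overline\partial(\overline\sigma\otimes V)=\overline\partial\overline\sigma\otimes V-\overline\sigma\wedge\overline\partial V$. "$\mu$ generates an abelian deformation" means: there is a power series $\Phi(t)=\sum_{r\ge1}t^r\phi_r$ with $\phi_r\in\mathfrak g^{*(0,1)}\otimes\mathfrak g^{1,0}$, $\phi_1=\mu$, convergent for small real $t$, such that for small $t$ all brackets among the vectors $\overline T_j+\Phi(t)\overline T_j$, $\overline W+\Phi(t)\overline W$ vanish. *)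

theory Defs
  imports "HOL-Analysis.Analysis"
begin

definition lie_algebra :: "('a::real_vector \<Rightarrow> 'a \<Rightarrow> 'a) \<Rightarrow> bool" where
  "lie_algebra br \<longleftrightarrow> bilinear br \<and> (\<forall>x y. br x y = - br y x)
     \<and> (\<forall>x y z. br x (br y z) + br y (br z x) + br z (br x y) = 0)"

definition two_step_nilpotent :: "('a::real_vector \<Rightarrow> 'a \<Rightarrow> 'a) \<Rightarrow> bool" where
  "two_step_nilpotent br \<longleftrightarrow> (\<forall>x y z. br x (br y z) = 0)"

definition lie_center :: "('a::real_vector \<Rightarrow> 'a \<Rightarrow> 'a) \<Rightarrow> 'a set" where
  "lie_center br = {z. \<forall>a. br z a = 0}"

definition abelian_complex_structure ::
  "('a::real_vector \<Rightarrow> 'a \<Rightarrow> 'a) \<Rightarrow> ('a \<Rightarrow> 'a) \<Rightarrow> bool" where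
  "abelian_complex_structure br J \<longleftrightarrow> linear J \<and> (\<forall>a. J (J a) = - a)
     \<and> (\<forall>a b. br (J a) (J b) = br a b)"

text \<open>Existence of a basis with rational structure constants
  (Malcev: equivalent to the existence of a co-compact lattice Gamma in G).\<close>
definition rational_structure :: "('a::euclidean_space \<Rightarrow> 'a \<Rightarrow> 'a) \<Rightarrow> bool" where
  "rational_structure br \<longleftrightarrow> (\<exists>b :: nat \<Rightarrow> 'a. \<exists>c :: nat \<Rightarrow> nat \<Rightarrow> nat \<Rightarrow> real.
      inj_on b {..<DIM('a)} \<and> independent (b ` {..<DIM('a)}) \<and> span (b ` {..<DIM('a)}) = UNIV
      \<and> (\<forall>i j k. c i j k \<in> \<rat>)
      \<and> (\<forall>i<DIM('a). \<forall>j<DIM('a). br (b i) (b j) = (\<Sum>k<DIM('a). c i j k *\<^sub>R b k)))"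

section \<open>Complexification g_C = g \<oplus> i g, elements (u,v) standing for u + i v\<close>

definition cmul :: "complex \<Rightarrow> 'a::real_vector \<times> 'a \<Rightarrow> 'a \<times> 'a" where
  "cmul c x = (Re c *\<^sub>R fst x - Im c *\<^sub>R snd x, Re c *\<^sub>R snd x + Im c *\<^sub>R fst x)"

definition cbr :: "('a::real_vector \<Rightarrow> 'a \<Rightarrow> 'a) \<Rightarrow> 'a \<times> 'a \<Rightarrow> 'a \<times> 'a \<Rightarrow> 'a \<times> 'a" where
  "cbr br x y = (br (fst x) (fst y) - br (snd x) (snd y), br (fst x) (snd y) + br (snd x) (fst y))"

definition cJ :: "('a \<Rightarrow> 'a) \<Rightarrow> 'a \<times> 'a \<Rightarrow> 'a \<times> 'a" where
  "cJ J x = (J (fst x), J (snd x))"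

definition g10 :: "('a::real_vector \<Rightarrow> 'a) \<Rightarrow> ('a \<times> 'a) set" where
  "g10 J = {x. cJ J x = cmul \<i> x}"

definition g01 :: "('a::real_vector \<Rightarrow> 'a) \<Rightarrow> ('a \<times> 'a) set" where
  "g01 J = {x. cJ J x = cmul (- \<i>) x}"

definition proj10 :: "('a::real_vector \<Rightarrow> 'a) \<Rightarrow> 'a \<times> 'a \<Rightarrow> 'a \<times> 'a" where
  "proj10 J x = cmul (1/2) (x - cmul \<i> (cJ J x))"

text \<open>Elements of g^{*(0,1)} \<otimes> g^{1,0}: complex-linear maps g^{0,1} \<rightarrow> g^{1,0}
  (only their values on g^{0,1} matter).\<close>
definition form01_10 :: "('a::real_vector \<Rightarrow> 'a) \<Rightarrow> ('a \<times> 'a \<Rightarrow> 'a \<times> 'a) \<Rightarrow> bool" where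
  "form01_10 J \<phi> \<longleftrightarrow> (\<forall>A\<in>g01 J. \<phi> A \<in> g10 J)
     \<and> (\<forall>A\<in>g01 J. \<forall>B\<in>g01 J. \<phi> (A + B) = \<phi> A + \<phi> B)
     \<and> (\<forall>c. \<forall>A\<in>g01 J. \<phi> (cmul c A) = cmul c (\<phi> A))"

text \<open>dbar of mu, as a g^{1,0}-valued (0,2)-form evaluated on (A,B) in g^{0,1}:
  (dbar mu)(A,B) = [A, mu B]^{1,0} - [B, mu A]^{1,0} - mu([A,B]).\<close>
definition dbar :: "('a::real_vector \<Rightarrow> 'a \<Rightarrow> 'a) \<Rightarrow> ('a \<Rightarrow> 'a) \<Rightarrow> ('a \<times> 'a \<Rightarrow> 'a \<times> 'a)
    \<Rightarrow> 'a \<times> 'a \<Rightarrow> 'a \<times> 'a \<Rightarrow> 'a \<times> 'a" where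
  "dbar br J \<mu> A B = proj10 J (cbr br A (\<mu> B)) - proj10 J (cbr br B (\<mu> A)) - \<mu> (cbr br A B)"

definition dbar_closed :: "('a::real_vector \<Rightarrow> 'a \<Rightarrow> 'a) \<Rightarrow> ('a \<Rightarrow> 'a) \<Rightarrow> ('a \<times> 'a \<Rightarrow> 'a \<times> 'a) \<Rightarrow> bool" where
  "dbar_closed br J \<mu> \<longleftrightarrow> (\<forall>A\<in>g01 J. \<forall>B\<in>g01 J. dbar br J \<mu> A B = 0)"

text \<open>mu generates an abelian deformation: Phi(t) = sum_{r>=1} t^r phi_r with phi_1 = mu
  (here phi_r is written \<phi> (r-1)), convergent for small real t, and for small t the
  deformed (0,1)-vectors A + Phi(t) A pairwise commute.\<close>
definition generates_abelian_deformation ::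
  "('a::real_normed_vector \<Rightarrow> 'a \<Rightarrow> 'a) \<Rightarrow> ('a \<Rightarrow> 'a) \<Rightarrow> ('a \<times> 'a \<Rightarrow> 'a \<times> 'a) \<Rightarrow> bool" where
  "generates_abelian_deformation br J \<mu> \<longleftrightarrow>
     (\<exists>\<phi> :: nat \<Rightarrow> ('a \<times> 'a \<Rightarrow> 'a \<times> 'a).
        (\<forall>r. form01_10 J (\<phi> r)) \<and> (\<forall>A\<in>g01 J. \<phi> 0 A = \<mu> A) \<and>
        (\<exists>\<epsilon>>0. \<forall>t::real. \<bar>t\<bar> < \<epsilon> \<longrightarrow>
            (\<forall>A\<in>g01 J. summable (\<lambda>r. t ^ Suc r *\<^sub>R \<phi> r A)) \<and>
            (\<forall>A\<in>g01 J. \<forall>B\<in>g01 J.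
               cbr br (A + (\<Sum>r. t ^ Suc r *\<^sub>R \<phi> r A)) (B + (\<Sum>r. t ^ Suc r *\<^sub>R \<phi> r B)) = 0)))"

text \<open>g is isomorphic to h_{2n+1} \<oplus> R: there is a basis x_1..x_n, y_1..y_n, z, w
  (b 0..b(n-1), b n..b(2n-1), b(2n), b(2n+1)) with [x_i,y_i] = z and all other brackets
  of basis vectors zero (besides [y_i,x_i] = -z).  For n = 0 this is R^2 (h_1 = R).\<close>
definition iso_heis_plus_R :: "('a::real_vector \<Rightarrow> 'a \<Rightarrow> 'a) \<Rightarrow> nat \<Rightarrow> bool" where
  "iso_heis_plus_R br n \<longleftrightarrow> (\<exists>b :: nat \<Rightarrow> 'a.
      inj_on b {..<2*n+2} \<and> independent (b ` {..<2*n+2}) \<and> span (b ` {..<2*n+2}) = UNIV \<and>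
      (\<forall>i<2*n+2. \<forall>j<2*n+2. br (b i) (b j) =
          (if i < n \<and> j = n + i then b (2*n)
           else if j < n \<and> i = n + j then - b (2*n) else 0)))"

end

theory Submission
  imports Defs
begin

lemma powser_coeff0_real:
  fixes d :: "nat \<Rightarrow> real" and \<epsilon> :: real
  assumes e: "\<epsilon> > 0"
    and H: "\<And>t. \<bar>t\<bar> < \<epsilon> \<Longrightarrow> summable (\<lambda>r. t ^ Suc r * d r) \<and> (\<Sum>r. t ^ Suc r * d r) = 0"
  shows "d 0 = 0"
proof -
  define K where "K = \<epsilon> / 2"
  have K: "K > 0" "K < \<epsilon>" using e by (auto simp: K_def)
  have s1: "summable (\<lambda>r. K ^ Suc r * d r)" using H[of K] K by auto
  have "summable (\<lambda>r. (1/K) * (K ^ Suc r * d r))" using summable_mult[OF s1] by blast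
  moreover have "\<And>r. (1/K) * (K ^ Suc r * d r) = d r * K ^ r" using K by auto
  ultimately have s2: "summable (\<lambda>r. d r * K ^ r)" by simp
  define f where "f x = (\<Sum>r. d r * x ^ r)" for x :: real
  have "isCont f 0" unfolding f_def by (rule isCont_powser[OF s2]) (use K in auto)
  hence l1: "(f \<longlongrightarrow> f 0) (at 0)" by (simp add: isCont_def)
  have f0: "f 0 = d 0" unfolding f_def using powser_zero[of d] by simp
  have ev0: "f x = 0" if x: "x \<noteq> 0" "\<bar>x\<bar> < \<epsilon>" for x
  proof -
    from H[OF x(2)] have s: "summable (\<lambda>r. x ^ Suc r * d r)" and z: "(\<Sum>r. x ^ Suc r * d r) = 0" by auto
    have "(\<Sum>r. x ^ Suc r * d r) = x * (\<Sum>r. d r * x ^ r)"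
    proof -
      have "summable (\<lambda>r. (1/x) * (x ^ Suc r * d r))" using summable_mult[OF s] by blast
      moreover have "\<And>r. (1/x) * (x ^ Suc r * d r) = d r * x ^ r" using x by auto
      ultimately have s3: "summable (\<lambda>r. d r * x ^ r)" by simp
      have "x * (\<Sum>r. d r * x ^ r) = (\<Sum>r. x * (d r * x ^ r))" using suminf_mult[OF s3] by simp
      also have "\<dots> = (\<Sum>r. x ^ Suc r * d r)" by (simp add: algebra_simps)
      finally show ?thesis by simp
    qed
    with z x show "f x = 0" by (simp add: f_def)
  qed
  have ev: "eventually (\<lambda>x. f x = 0) (at (0::real))"
    unfolding eventually_at using e ev0 by (auto simp: dist_real_def)
  hence "(f \<longlongrightarrow> 0) (at 0)" by (rule tendsto_eventually)
  with l1 have "f 0 = 0" using tendsto_unique[OF trivial_limit_at] by blast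
  thus ?thesis using f0 by simp
qed

lemma powser_coeff0:
  fixes c :: "nat \<Rightarrow> 'b::euclidean_space" and \<epsilon> :: real
  assumes e: "\<epsilon> > 0"
    and H: "\<And>t. \<bar>t\<bar> < \<epsilon> \<Longrightarrow> summable (\<lambda>r. t ^ Suc r *\<^sub>R c r) \<and> (\<Sum>r. t ^ Suc r *\<^sub>R c r) = 0"
  shows "c 0 = 0"
proof (rule euclidean_eqI)
  fix b :: 'b assume "b \<in> Basis"
  have "(\<lambda>r. c r \<bullet> b) 0 = 0"
  proof (rule powser_coeff0_real[OF e])
    fix t :: real assume t: "\<bar>t\<bar> < \<epsilon>"
    from H[OF t] have s: "summable (\<lambda>r. t ^ Suc r *\<^sub>R c r)" and z: "(\<Sum>r. t ^ Suc r *\<^sub>R c r) = 0" by auto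
    have bl: "bounded_linear (\<lambda>x::'b. x \<bullet> b)" by (rule bounded_linear_inner_left)
    have "summable (\<lambda>r. (t ^ Suc r *\<^sub>R c r) \<bullet> b)" using bounded_linear.summable[OF bl s] .
    moreover have "(\<Sum>r. (t ^ Suc r *\<^sub>R c r) \<bullet> b) = 0" 
      using bounded_linear.suminf[OF bl s] z by simp
    ultimately show "summable (\<lambda>r. t ^ Suc r * (c r \<bullet> b)) \<and> (\<Sum>r. t ^ Suc r * (c r \<bullet> b)) = 0"
      by simp
  qed
  thus "c 0 \<bullet> b = 0 \<bullet> b" by simp
qed

definition sgnf :: "nat \<Rightarrow> nat \<Rightarrow> nat \<Rightarrow> real" where
  "sgnf n i j = (if i < n \<and> j = n + i then 1 else if j < n \<and> i = n + j then -1 else 0)"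

lemma darboux:
  fixes \<omega> :: "'a::euclidean_space \<Rightarrow> 'a \<Rightarrow> real"
  assumes bil: "bilinear \<omega>" and sk: "\<And>x y. \<omega> x y = - \<omega> y x"
  shows "subspace V \<Longrightarrow> {x. \<forall>y. \<omega> x y = 0} \<subseteq> V \<Longrightarrow> (\<forall>x\<in>V. (\<forall>y\<in>V. \<omega> x y = 0) \<longrightarrow> (\<forall>y. \<omega> x y = 0))
    \<Longrightarrow> \<exists>n b. (\<forall>i<2*n. b i \<in> V) \<and> V \<subseteq> span (b ` {..<2*n} \<union> {x. \<forall>y. \<omega> x y = 0})
        \<and> (\<forall>i<2*n. \<forall>j<2*n. \<omega> (b i) (b j) = sgnf n i j)"
proof (induction "dim V" arbitrary: V rule: less_induct)
  case less
  define R where "R = {x. \<forall>y. \<omega> x y = 0}"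
  have sR: "subspace R" unfolding R_def subspace_def
    by (auto simp: bilinear_ladd[OF bil] bilinear_lmul[OF bil] bilinear_lzero[OF bil])
  have om0: "\<omega> x x = 0" for x using sk[of x x] by simp
  show ?case
  proof (cases "\<forall>x\<in>V. \<forall>y\<in>V. \<omega> x y = 0")
    case True
    hence "V \<subseteq> R" using less.prems(3) unfolding R_def by blast
    hence "V \<subseteq> span (b ` {..<2*(0::nat)} \<union> R)" for b :: "nat \<Rightarrow> 'a"
      using span_superset[of R] by auto
    thus ?thesis unfolding R_def by (intro exI[of _ "0::nat"]) auto
  next
    case False
    then obtain x y0 where x: "x \<in> V" and y0: "y0 \<in> V" and nz: "\<omega> x y0 \<noteq> 0" by blast
    define y where "y = (1 / \<omega> x y0) *\<^sub>R y0"
    have y: "y \<in> V" using y0 less.prems(1) unfolding y_def by (simp add: subspace_scale)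
    have xy: "\<omega> x y = 1" using nz unfolding y_def by (simp add: bilinear_rmul[OF bil])
    have yx: "\<omega> y x = -1" using xy sk[of y x] by simp
    define V' where "V' = {u\<in>V. \<omega> x u = 0 \<and> \<omega> y u = 0}"
    have sV': "subspace V'" using less.prems(1) unfolding V'_def subspace_def
      by (auto simp: bilinear_radd[OF bil] bilinear_rmul[OF bil] bilinear_rzero[OF bil])
    have RV': "R \<subseteq> V'" using less.prems(2) unfolding V'_def R_def
      by (auto simp: sk[of x] sk[of y])
    have V'V: "V' \<subseteq> V" unfolding V'_def by auto
    have xV': "x \<notin> V'" using yx unfolding V'_def by auto
    have dimlt: "dim V' < dim V"
    proof (rule dim_psubset)
      have e1: "span V' = V'" using sV' by (simp add: span_eq_iff)
      have e2: "span V = V" using less.prems(1) by (simp add: span_eq_iff)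
      show "span V' \<subset> span V" unfolding e1 e2 using V'V xV' x by blast
    qed
    define pr where "pr w = w - \<omega> x w *\<^sub>R y + \<omega> y w *\<^sub>R x" for w
    have prV': "pr w \<in> V'" if "w \<in> V" for w
    proof -
      have "pr w \<in> V" using that x y less.prems(1) unfolding pr_def
        by (simp add: subspace_diff subspace_add subspace_scale)
      moreover have "\<omega> x (pr w) = 0" unfolding pr_def
        by (simp add: bilinear_radd[OF bil] bilinear_rsub[OF bil] bilinear_rmul[OF bil] xy om0)
      moreover have "\<omega> y (pr w) = 0" unfolding pr_def
        by (simp add: bilinear_radd[OF bil] bilinear_rsub[OF bil] bilinear_rmul[OF bil] yx om0)
      ultimately show ?thesis unfolding V'_def by auto
    qed
    have nd: "\<forall>u\<in>V'. (\<forall>w\<in>V'. \<omega> u w = 0) \<longrightarrow> (\<forall>w. \<omega> u w = 0)"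
    proof (intro ballI impI)
      fix u assume u: "u \<in> V'" and h: "\<forall>w\<in>V'. \<omega> u w = 0"
      have ux: "\<omega> u x = 0" and uy: "\<omega> u y = 0" using u sk[of u x] sk[of u y] unfolding V'_def by auto
      have "\<omega> u w = 0" if "w \<in> V" for w
      proof -
        have "\<omega> u (pr w) = 0" using h prV'[OF that] by auto
        thus ?thesis unfolding pr_def
          by (simp add: bilinear_radd[OF bil] bilinear_rsub[OF bil] bilinear_rmul[OF bil] ux uy)
      qed
      thus "\<forall>w. \<omega> u w = 0" using less.prems(3) u V'V by blast
    qed
    obtain n b where bV: "\<forall>i<2*n. b i \<in> V'" and bsp: "V' \<subseteq> span (b ` {..<2*n} \<union> R)"
      and bom: "\<forall>i<2*n. \<forall>j<2*n. \<omega> (b i) (b j) = sgnf n i j"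
      using less.hyps[OF dimlt sV' RV'[unfolded R_def] nd] unfolding R_def by blast
    define idx where "idx i = (if i < Suc n then i - 1 else i - 2)" for i
    define c where "c i = (if i = 0 then x else if i = Suc n then y else b (idx i))" for i
    have idx_rng: "idx i < 2*n" if "i < 2 * Suc n" "i \<noteq> 0" "i \<noteq> Suc n" for i
      using that unfolding idx_def by auto
    have cV: "\<forall>i<2*Suc n. c i \<in> V"
      using bV idx_rng x y V'V unfolding c_def by auto
    have bx: "\<omega> x (b k) = 0" "\<omega> y (b k) = 0" "\<omega> (b k) x = 0" "\<omega> (b k) y = 0" if "k < 2*n" for k
      using bV that sk[of x "b k"] sk[of y "b k"] unfolding V'_def by auto
    have sg: "sgnf n (idx i) (idx j) = sgnf (Suc n) i j"
      if "i < 2 * Suc n" "i \<noteq> 0" "i \<noteq> Suc n" "j < 2 * Suc n" "j \<noteq> 0" "j \<noteq> Suc n" for i j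
    proof -
      have A: "idx i < n \<and> idx j = n + idx i \<longleftrightarrow> i < Suc n \<and> j = Suc n + i"
        using that unfolding idx_def by auto
      have B: "idx j < n \<and> idx i = n + idx j \<longleftrightarrow> j < Suc n \<and> i = Suc n + j"
        using that unfolding idx_def by auto
      show ?thesis unfolding sgnf_def using A B by presburger
    qed
    have com: "\<forall>i<2*Suc n. \<forall>j<2*Suc n. \<omega> (c i) (c j) = sgnf (Suc n) i j"
    proof (intro allI impI)
      fix i j assume i: "i < 2 * Suc n" and j: "j < 2 * Suc n"
      have ci: "c i = (if i = 0 then x else if i = Suc n then y else b (idx i))" for i unfolding c_def by simp
      show "\<omega> (c i) (c j) = sgnf (Suc n) i j"
      proof (cases "i = 0 \<or> i = Suc n")
        case True
        show ?thesis
        proof (cases "j = 0 \<or> j = Suc n")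
          case True
          with \<open>i = 0 \<or> i = Suc n\<close> show ?thesis
            by (elim disjE) (simp_all add: c_def sgnf_def xy yx om0)
        next
          case False
          hence jj: "idx j < 2*n" using idx_rng[OF j] by auto
          have "c j = b (idx j)" using False unfolding c_def by auto
          with \<open>i = 0 \<or> i = Suc n\<close> False show ?thesis
            using bx[OF jj] by (elim disjE) (simp_all add: c_def sgnf_def)
        qed
      next
        case False
        hence ii: "idx i < 2*n" using idx_rng[OF i] by auto
        have cii: "c i = b (idx i)" using False unfolding c_def by auto
        show ?thesis
        proof (cases "j = 0 \<or> j = Suc n")
          case True
          with False show ?thesis
            using bx[OF ii] cii by (elim disjE) (simp_all add: c_def sgnf_def)
        next
          case False2: False
          hence jj: "idx j < 2*n" using idx_rng[OF j] by auto
          have "c j = b (idx j)" using False2 unfolding c_def by auto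
          moreover have "\<omega> (b (idx i)) (b (idx j)) = sgnf n (idx i) (idx j)" using bom ii jj by blast
          ultimately show ?thesis using cii sg[OF i _ _ j] False False2 by auto
        qed
      qed
    qed
    have bimg: "b k \<in> c ` {..<2*Suc n}" if "k < 2*n" for k
    proof (cases "k < n")
      case True
      hence "c (Suc k) = b k" unfolding c_def idx_def by auto
      thus ?thesis using that by (metis image_eqI lessThan_iff True less_trans_Suc mult_2 add_Suc_right
          Suc_less_eq trans_less_add1)
    next
      case False
      hence "c (k + 2) = b k" unfolding c_def idx_def by auto
      moreover have "k + 2 < 2 * Suc n" using that by auto
      ultimately show ?thesis by (metis image_eqI lessThan_iff)
    qed
    have sub: "b ` {..<2*n} \<union> R \<subseteq> span (c ` {..<2*Suc n} \<union> R)"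
      using bimg by (auto intro: span_base)
    have "V' \<subseteq> span (c ` {..<2*Suc n} \<union> R)"
      using bsp span_minimal[OF sub subspace_span] by blast
    moreover have "x \<in> span (c ` {..<2*Suc n} \<union> R)" 
      by (rule span_base) (auto simp: c_def intro!: image_eqI[of _ _ 0])
    moreover have "y \<in> span (c ` {..<2*Suc n} \<union> R)" 
      by (rule span_base) (auto simp: c_def intro!: image_eqI[of _ _ "Suc n"])
    ultimately have "V \<subseteq> span (c ` {..<2*Suc n} \<union> R)"
    proof -
      assume a: "V' \<subseteq> span (c ` {..<2*Suc n} \<union> R)" "x \<in> span (c ` {..<2*Suc n} \<union> R)"
        "y \<in> span (c ` {..<2*Suc n} \<union> R)"
      show ?thesis
      proof
        fix w assume w: "w \<in> V"
        have "w = pr w + \<omega> x w *\<^sub>R y - \<omega> y w *\<^sub>R x" unfolding pr_def by simp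
        moreover have "pr w \<in> span (c ` {..<2*Suc n} \<union> R)" using a prV'[OF w] by auto
        ultimately show "w \<in> span (c ` {..<2*Suc n} \<union> R)" using a
          by (metis span_add span_diff span_scale)
      qed
    qed
    thus ?thesis using cV com unfolding R_def by blast
  qed
qed

lemma aux_dbar:
  fixes f :: "'a::real_vector \<Rightarrow> 'a"
  assumes lf: "linear f" and ff: "\<And>x. f (f x) = - x" and P: "P = Q - f X + f Y"
  shows "2 *\<^sub>R X - 2 *\<^sub>R f P = 2 *\<^sub>R Y - 2 *\<^sub>R f Q \<and> - (2 *\<^sub>R P) - 2 *\<^sub>R f X = - (2 *\<^sub>R Q) - 2 *\<^sub>R f Y"
proof -
  have fP: "f P = f Q + X - Y" unfolding P using lf ff by (simp add: linear_diff linear_add)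
  have c1: "2 *\<^sub>R X - 2 *\<^sub>R f P = 2 *\<^sub>R Y - 2 *\<^sub>R f Q" unfolding fP by (simp add: algebra_simps)
  have c2: "- (2 *\<^sub>R P) - 2 *\<^sub>R f X = - (2 *\<^sub>R Q) - 2 *\<^sub>R f Y" unfolding P by (simp add: algebra_simps)
  show ?thesis using c1 c2 by blast
qed

locale acs =
  fixes br :: "'a::euclidean_space \<Rightarrow> 'a \<Rightarrow> 'a" and J :: "'a \<Rightarrow> 'a"
  assumes bil: "bilinear br" and skew: "\<And>x y. br x y = - br y x"
    and nil2: "\<And>x y z. br x (br y z) = 0"
    and linJ: "linear J" and JJ[simp]: "\<And>a. J (J a) = - a"
    and brJJ: "\<And>a b. br (J a) (J b) = br a b"
begin

lemmas br_simps[simp] = bilinear_ladd[OF bil] bilinear_radd[OF bil] bilinear_lmul[OF bil]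
  bilinear_rmul[OF bil] bilinear_lneg[OF bil] bilinear_rneg[OF bil] bilinear_lzero[OF bil]
  bilinear_rzero[OF bil] bilinear_lsub[OF bil] bilinear_rsub[OF bil]

lemmas J_simps[simp] = linear_add[OF linJ] linear_scale[OF linJ] linear_neg[OF linJ]
  linear_diff[OF linJ] linear_0[OF linJ]

lemma brJl[simp]: "br (J a) b = - br a (J b)"
proof -
  have "br (J a) b = br (J (J a)) (J b)" using brJJ[of "J a" b] by simp
  thus ?thesis by simp
qed

lemma br_self[simp]: "br a a = 0"
proof -
  have "br a a + br a a = 0" using skew[of a a] by (simp add: eq_neg_iff_add_eq_0)
  hence "(2::real) *\<^sub>R br a a = 0" by (simp add: scaleR_2)
  thus ?thesis by simp
qed

lemma br_in_C: "br x y \<in> lie_center br"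
proof -
  have "br (br x y) a = 0" for a using skew[of "br x y" a] nil2[of a x y] by simp
  thus ?thesis unfolding lie_center_def by auto
qed

lemma subspace_C: "subspace (lie_center br)"
  unfolding lie_center_def subspace_def by auto

lemma J_C: "c \<in> lie_center br \<Longrightarrow> J c \<in> lie_center br"
proof -
  assume c: "c \<in> lie_center br"
  have "br (J c) a = 0" for a using c unfolding lie_center_def by simp
  thus ?thesis unfolding lie_center_def by simp
qed

lemma g01_iff: "A \<in> g01 J \<longleftrightarrow> snd A = J (fst A)"
  by (cases A) (auto simp: g01_def cJ_def cmul_def)

lemma g10_iff: "A \<in> g10 J \<longleftrightarrow> snd A = - J (fst A)"
  by (cases A) (auto simp: g10_def cJ_def cmul_def)

lemma g01_abel: "A \<in> g01 J \<Longrightarrow> B \<in> g01 J \<Longrightarrow> cbr br A B = 0"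
  by (cases A; cases B) (auto simp: g01_iff cbr_def zero_prod_def)

lemma g10_abel: "A \<in> g10 J \<Longrightarrow> B \<in> g10 J \<Longrightarrow> cbr br A B = 0"
  by (cases A; cases B) (auto simp: g10_iff cbr_def zero_prod_def)

lemma subspace_g10: "subspace (g10 J)"
  by (auto simp: subspace_def g10_iff algebra_simps)

lemma cbr_lin_r: "linear (cbr br A)"
  unfolding linear_iff cbr_def by (auto simp: algebra_simps)

lemma cbr_lin_l: "linear (\<lambda>X. cbr br X B)"
  unfolding linear_iff cbr_def by (auto simp: algebra_simps)

lemma cbr_add: "cbr br (A + P) (B + Q) = cbr br A B + cbr br A Q + cbr br P B + cbr br P Q"
  unfolding cbr_def by (auto simp: algebra_simps)

definition mu :: "('a \<Rightarrow> 'a) \<Rightarrow> 'a \<times> 'a \<Rightarrow> 'a \<times> 'a" where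
  "mu m A = (m (fst A), - J (m (fst A)))"

lemma form01_mu:
  assumes lm: "linear m" and ac: "\<And>x. m (J x) = - J (m x)"
  shows "form01_10 J (mu m)"
  unfolding form01_10_def
proof (intro conjI ballI allI)
  fix A assume "A \<in> g01 J" show "mu m A \<in> g10 J" by (simp add: g10_iff mu_def)
next
  fix A B show "mu m (A + B) = mu m A + mu m B" by (simp add: mu_def linear_add[OF lm])
next
  fix c A assume "A \<in> g01 J"
  hence A: "snd A = J (fst A)" by (simp add: g01_iff)
  show "mu m (cmul c A) = cmul c (mu m A)"
    using A by (simp add: mu_def cmul_def linear_add[OF lm] linear_diff[OF lm] linear_scale[OF lm] ac
      algebra_simps)
qed

lemma cbr_mu: "cbr br (a, J a) (mu m (b, J b)) = (2 *\<^sub>R br a (m b), - (2 *\<^sub>R br a (J (m b))))"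
  by (simp add: cbr_def mu_def scaleR_2)

lemma proj10_pair: "proj10 J (u, v) = ((1/2) *\<^sub>R (u + J v), (1/2) *\<^sub>R (v - J u))"
  by (simp add: proj10_def cmul_def cJ_def)

lemma dbar_mu:
  assumes lm: "linear m" and ac: "\<And>x. m (J x) = - J (m x)"
    and H: "\<And>a b. br a (J (m b)) - br b (J (m a)) = - J (br a (m b) - br b (m a))"
  shows "dbar_closed br J (mu m)"
  unfolding dbar_closed_def
proof (intro ballI)
  fix A B assume A: "A \<in> g01 J" and B: "B \<in> g01 J"
  obtain a b where Ae: "A = (a, J a)" and Be: "B = (b, J b)" using A B
    by (metis g01_iff prod.collapse)
  have e1: "cbr br A B = 0" using g01_abel[OF A B] .
  have "mu m 0 = 0" by (simp add: mu_def linear_0[OF lm] zero_prod_def)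
  with e1 have z: "mu m (cbr br A B) = 0" by simp
  have H1: "br a (J (m b)) = br b (J (m a)) - J (br a (m b)) + J (br b (m a))"
    using H[of a b] by (simp add: algebra_simps)
  show "dbar br J (mu m) A B = 0"
  proof -
    have z': "mu m (cbr br (a, J a) (b, J b)) = 0" using z Ae Be by simp
    show ?thesis unfolding dbar_def Ae Be cbr_mu proj10_pair z'
      apply (simp add: zero_prod_def)
      using aux_dbar[OF linJ JJ H1] apply assumption
      done
  qed
qed

lemma fst_cbr_mu: "fst (cbr br (a, J a) (mu m (b, J b))) = 2 *\<^sub>R br a (m b)"
  by (simp add: cbr_mu)

lemma fst_cbr_mu2: "fst (cbr br (mu m (a, J a)) (b, J b)) = 2 *\<^sub>R br (m a) b"
  by (simp add: cbr_def mu_def scaleR_2)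

lemma extract_S:
  assumes lm: "linear m" and ac: "\<And>x. m (J x) = - J (m x)"
    and gen: "generates_abelian_deformation br J (mu m)"
  shows "br a (m b) - br b (m a) = 0"
proof -
  obtain \<phi> where \<phi>f: "\<forall>r. form01_10 J (\<phi> r)" and \<phi>0: "\<forall>A\<in>g01 J. \<phi> 0 A = mu m A"
    and ex: "\<exists>\<epsilon>>0. \<forall>t::real. \<bar>t\<bar> < \<epsilon> \<longrightarrow>
            (\<forall>A\<in>g01 J. summable (\<lambda>r. t ^ Suc r *\<^sub>R \<phi> r A)) \<and>
            (\<forall>A\<in>g01 J. \<forall>B\<in>g01 J.
               cbr br (A + (\<Sum>r. t ^ Suc r *\<^sub>R \<phi> r A)) (B + (\<Sum>r. t ^ Suc r *\<^sub>R \<phi> r B)) = 0)"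
    using gen unfolding generates_abelian_deformation_def by blast
  then obtain \<epsilon> where e: "\<epsilon> > 0" and H: "\<And>t. \<bar>t\<bar> < \<epsilon> \<Longrightarrow>
            (\<forall>A\<in>g01 J. summable (\<lambda>r. t ^ Suc r *\<^sub>R \<phi> r A)) \<and>
            (\<forall>A\<in>g01 J. \<forall>B\<in>g01 J.
               cbr br (A + (\<Sum>r. t ^ Suc r *\<^sub>R \<phi> r A)) (B + (\<Sum>r. t ^ Suc r *\<^sub>R \<phi> r B)) = 0)"
    by blast
  define A where "A = (a, J a)"
  define B where "B = (b, J b)"
  have A: "A \<in> g01 J" "B \<in> g01 J" by (simp_all add: g01_iff A_def B_def)
  define c where "c r = cbr br A (\<phi> r B) + cbr br (\<phi> r A) B" for r
  have inG10: "\<phi> r X \<in> g10 J" if "X \<in> g01 J" for r X using \<phi>f that unfolding form01_10_def by blast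
  have closed10: "closed (g10 J)" by (rule closed_subspace[OF subspace_g10])
  have sum_in: "(\<Sum>r. t ^ Suc r *\<^sub>R \<phi> r X) \<in> g10 J"
    if s: "summable (\<lambda>r. t ^ Suc r *\<^sub>R \<phi> r X)" and X: "X \<in> g01 J" for t X
  proof -
    have L: "(\<lambda>n. \<Sum>r<n. t ^ Suc r *\<^sub>R \<phi> r X) \<longlonglongrightarrow> (\<Sum>r. t ^ Suc r *\<^sub>R \<phi> r X)"
      using s by (simp add: summable_LIMSEQ)
    have M: "(\<Sum>r<n. t ^ Suc r *\<^sub>R \<phi> r X) \<in> g10 J" for n
      by (rule subspace_sum[OF subspace_g10]) (auto intro: subspace_scale[OF subspace_g10] inG10[OF X])
    show ?thesis by (rule closed_sequentially[OF closed10 M L])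
  qed
  have blr: "bounded_linear (cbr br A)" using cbr_lin_r linear_conv_bounded_linear by blast
  have bll: "bounded_linear (\<lambda>X. cbr br X B)" using cbr_lin_l linear_conv_bounded_linear by blast
  have c0: "c 0 = 0"
  proof (rule powser_coeff0[OF e])
    fix t :: real assume t: "\<bar>t\<bar> < \<epsilon>"
    from H[OF t] A have sA: "summable (\<lambda>r. t ^ Suc r *\<^sub>R \<phi> r A)"
      and sB: "summable (\<lambda>r. t ^ Suc r *\<^sub>R \<phi> r B)"
      and z: "cbr br (A + (\<Sum>r. t ^ Suc r *\<^sub>R \<phi> r A)) (B + (\<Sum>r. t ^ Suc r *\<^sub>R \<phi> r B)) = 0"
      by auto
    have s1: "summable (\<lambda>r. cbr br A (t ^ Suc r *\<^sub>R \<phi> r B))"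
      by (rule bounded_linear.summable[OF blr sB])
    have s2: "summable (\<lambda>r. cbr br (t ^ Suc r *\<^sub>R \<phi> r A) B)"
      by (rule bounded_linear.summable[OF bll sA])
    have q1: "cbr br A (\<Sum>r. t ^ Suc r *\<^sub>R \<phi> r B) = (\<Sum>r. cbr br A (t ^ Suc r *\<^sub>R \<phi> r B))"
      by (rule bounded_linear.suminf[OF blr sB])
    have q2: "cbr br (\<Sum>r. t ^ Suc r *\<^sub>R \<phi> r A) B = (\<Sum>r. cbr br (t ^ Suc r *\<^sub>R \<phi> r A) B)"
      by (rule bounded_linear.suminf[OF bll sA])
    have lin: "cbr br A (t ^ Suc r *\<^sub>R \<phi> r B) + cbr br (t ^ Suc r *\<^sub>R \<phi> r A) B = t ^ Suc r *\<^sub>R c r" for r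
      unfolding c_def using linear_scale[OF cbr_lin_r] linear_scale[OF cbr_lin_l[of B]]
      by (simp add: scaleR_add_right)
    have zero: "cbr br A (\<Sum>r. t ^ Suc r *\<^sub>R \<phi> r B) + cbr br (\<Sum>r. t ^ Suc r *\<^sub>R \<phi> r A) B = 0"
      using z unfolding cbr_add
      using g01_abel[OF A] g10_abel[OF sum_in[OF sA A(1)] sum_in[OF sB A(2)]] by simp
    have "(\<Sum>r. t ^ Suc r *\<^sub>R c r) = (\<Sum>r. cbr br A (t ^ Suc r *\<^sub>R \<phi> r B) + cbr br (t ^ Suc r *\<^sub>R \<phi> r A) B)"
      using lin by simp
    also have "\<dots> = 0" using suminf_add[OF s1 s2] zero q1 q2 by simp
    finally have "(\<Sum>r. t ^ Suc r *\<^sub>R c r) = 0" .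
    moreover have "summable (\<lambda>r. t ^ Suc r *\<^sub>R c r)"
      using summable_add[OF s1 s2] lin by simp
    ultimately show "summable (\<lambda>r. t ^ Suc r *\<^sub>R c r) \<and> (\<Sum>r. t ^ Suc r *\<^sub>R c r) = 0" by simp
  qed
  have "c 0 = cbr br A (mu m B) + cbr br (mu m A) B" using \<phi>0 A unfolding c_def by simp
  hence "fst (c 0) = 2 *\<^sub>R br a (m b) + 2 *\<^sub>R br (m a) b"
    unfolding A_def B_def by (simp add: fst_cbr_mu fst_cbr_mu2)
  with c0 have "2 *\<^sub>R (br a (m b) + br (m a) b) = 0" by (simp add: scaleR_add_right)
  hence "br a (m b) + br (m a) b = 0" by simp
  thus ?thesis using skew[of "m a" b] by simp
qed

end

lemma alg_dbar:
  fixes p1 p2 p3 p4 :: complex and xa ya xb yb :: real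
  shows "(of_real xb * p2 - of_real yb * p1 - of_real xa * p4 + of_real ya * p3)
     + \<i> * (of_real xb * p1 + of_real yb * p2 - of_real xa * p3 - of_real ya * p4)
   = \<i> * ((of_real xb + \<i> * of_real yb) * (p1 - \<i> * p2) - (of_real xa + \<i> * of_real ya) * (p3 - \<i> * p4))"
  by (simp add: algebra_simps)

lemma alg_S:
  fixes p1 p2 p3 p4 :: complex and xa ya xb yb :: real
  shows "2 * (of_real xb * p1 + of_real yb * p2 - of_real xa * p3 - of_real ya * p4)
   = ((of_real xb + \<i> * of_real yb) * (p1 - \<i> * p2) - (of_real xa + \<i> * of_real ya) * (p3 - \<i> * p4))
   - ((of_real xb - \<i> * of_real yb) * (- p1 - \<i> * p2) - (of_real xa - \<i> * of_real ya) * (- p3 - \<i> * p4))"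
  by (simp add: algebra_simps)

locale acs2 = acs +
  fixes ell :: "'a \<Rightarrow> real" and z :: 'a
  assumes linell: "linear ell" and zC: "z \<in> lie_center br" and lz: "ell z = 1" and lJz: "ell (J z) = 0"
    and decode: "\<And>x. x \<in> lie_center br \<Longrightarrow> x = ell x *\<^sub>R z - ell (J x) *\<^sub>R J z"
    and hyp: "\<forall>\<mu>. form01_10 J \<mu> \<and> dbar_closed br J \<mu> \<longrightarrow> generates_abelian_deformation br J \<mu>"
begin

lemma S_zero:
  assumes lm: "linear m" and ac: "\<And>x. m (J x) = - J (m x)"
    and H: "\<And>a b. br a (J (m b)) - br b (J (m a)) = - J (br a (m b) - br b (m a))"
  shows "br a (m b) - br b (m a) = 0"
  using extract_S[OF lm ac] hyp form01_mu[OF lm ac] dbar_mu[OF lm ac H] by blast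

definition \<kappa> :: "'a \<Rightarrow> complex" where "\<kappa> x = Complex (ell x) (- ell (J x))"

lemmas l_simps[simp] = linear_add[OF linell] linear_scale[OF linell] linear_neg[OF linell]
  linear_diff[OF linell] linear_0[OF linell]

lemma \<kappa>_add[simp]: "\<kappa> (x + y) = \<kappa> x + \<kappa> y" by (simp add: \<kappa>_def complex_eq_iff)
lemma \<kappa>_diff[simp]: "\<kappa> (x - y) = \<kappa> x - \<kappa> y" by (simp add: \<kappa>_def complex_eq_iff)
lemma \<kappa>_neg[simp]: "\<kappa> (- x) = - \<kappa> x" by (simp add: \<kappa>_def complex_eq_iff)
lemma \<kappa>_0[simp]: "\<kappa> 0 = 0" by (simp add: \<kappa>_def complex_eq_iff)
lemma \<kappa>_scale[simp]: "\<kappa> (r *\<^sub>R x) = of_real r * \<kappa> x" by (simp add: \<kappa>_def complex_eq_iff)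
lemma \<kappa>_J[simp]: "\<kappa> (J x) = \<i> * \<kappa> x" by (simp add: \<kappa>_def complex_eq_iff)

lemma \<kappa>_inj: "x \<in> lie_center br \<Longrightarrow> \<kappa> x = 0 \<Longrightarrow> x = 0"
  using decode[of x] by (simp add: \<kappa>_def complex_eq_iff)

lemma \<kappa>_eq: "x \<in> lie_center br \<Longrightarrow> y \<in> lie_center br \<Longrightarrow> \<kappa> x = \<kappa> y \<Longrightarrow> x = y"
  using \<kappa>_inj[of "x - y"] subspace_diff[OF subspace_C] by auto

definition \<beta> :: "'a \<Rightarrow> 'a \<Rightarrow> complex" where "\<beta> a b = \<kappa> (br a b)"
definition Bf :: "'a \<Rightarrow> 'a \<Rightarrow> complex" where "Bf a v = \<beta> a v - \<i> * \<beta> a (J v)"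

lemma Bf_Jl: "Bf (J b) u = - \<i> * Bf b u"
  by (simp add: Bf_def \<beta>_def algebra_simps)

lemma Bf_swap: "Bf v a = - \<beta> a v - \<i> * \<beta> a (J v)"
proof -
  have "br v a = - br a v" by (rule skew)
  moreover have "br v (J a) = br a (J v)"
    using skew[of v "J a"] brJl[of a v] by simp
  ultimately show ?thesis by (simp add: Bf_def \<beta>_def)
qed

lemma Bf_ladd: "Bf (x + y) a = Bf x a + Bf y a" by (simp add: Bf_def \<beta>_def algebra_simps)
lemma Bf_lscale: "Bf (r *\<^sub>R x) a = of_real r * Bf x a" by (simp add: Bf_def \<beta>_def algebra_simps)
lemma Bf_radd: "Bf a (x + y) = Bf a x + Bf a y" by (simp add: Bf_def \<beta>_def algebra_simps)
lemma Bf_rscale: "Bf a (r *\<^sub>R x) = of_real r * Bf a x" by (simp add: Bf_def \<beta>_def algebra_simps)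
lemma Bf_rJ: "Bf a (J x) = \<i> * Bf a x" by (simp add: Bf_def \<beta>_def algebra_simps)

lemma L2:
  assumes P: "\<forall>a b. Bf b u * Bf a v = Bf a u * Bf b v"
  shows "cnj (Bf b u) * Bf v a = cnj (Bf a u) * Bf v b"
proof -
  define \<alpha> where "\<alpha> x = Re (Bf x u)" for x
  have \<alpha>J: "\<alpha> (J x) = Im (Bf x u)" for x unfolding \<alpha>_def Bf_Jl by simp
  have \<alpha>add: "\<alpha> (x + y) = \<alpha> x + \<alpha> y" for x y unfolding \<alpha>_def Bf_ladd by simp
  have \<alpha>scale: "\<alpha> (r *\<^sub>R x) = r * \<alpha> x" for r x unfolding \<alpha>_def Bf_lscale by simp
  have \<alpha>neg: "\<alpha> (- x) = - \<alpha> x" for x using \<alpha>scale[of "-1" x] by simp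
  define m where "m x = \<alpha> x *\<^sub>R v + \<alpha> (J x) *\<^sub>R J v" for x
  have lm: "linear m" unfolding linear_iff m_def
    by (simp add: \<alpha>add \<alpha>scale algebra_simps)
  have ac: "m (J x) = - J (m x)" for x unfolding m_def by (simp add: \<alpha>neg algebra_simps)
  have ua: "Bf x u = of_real (\<alpha> x) + \<i> * of_real (\<alpha> (J x))" for x
    unfolding \<alpha>J by (simp add: \<alpha>_def complex_eq_iff)
  have kS: "\<kappa> (br a (m b) - br b (m a)) = of_real (\<alpha> b) * \<beta> a v + of_real (\<alpha> (J b)) * \<beta> a (J v)
     - of_real (\<alpha> a) * \<beta> b v - of_real (\<alpha> (J a)) * \<beta> b (J v)" for a b
    unfolding m_def \<beta>_def by simp
  have kS': "\<kappa> (br a (J (m b)) - br b (J (m a))) = of_real (\<alpha> b) * \<beta> a (J v) - of_real (\<alpha> (J b)) * \<beta> a v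
     - of_real (\<alpha> a) * \<beta> b (J v) + of_real (\<alpha> (J a)) * \<beta> b v" for a b
    unfolding m_def \<beta>_def by simp
  have H: "br a (J (m b)) - br b (J (m a)) = - J (br a (m b) - br b (m a))" for a b
  proof (rule \<kappa>_eq)
    show "br a (J (m b)) - br b (J (m a)) \<in> lie_center br"
      by (intro subspace_diff[OF subspace_C] br_in_C)
    show "- J (br a (m b) - br b (m a)) \<in> lie_center br"
      by (intro subspace_neg[OF subspace_C] J_C subspace_diff[OF subspace_C] br_in_C)
    have "Bf b u * Bf a v - Bf a u * Bf b v = 0" using P by simp
    hence "(of_real (\<alpha> b) + \<i> * of_real (\<alpha> (J b))) * (\<beta> a v - \<i> * \<beta> a (J v))
        - (of_real (\<alpha> a) + \<i> * of_real (\<alpha> (J a))) * (\<beta> b v - \<i> * \<beta> b (J v)) = 0"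
      by (simp only: ua[of b] ua[of a] Bf_def[of a v] Bf_def[of b v])
    hence "\<kappa> (br a (J (m b)) - br b (J (m a))) + \<i> * \<kappa> (br a (m b) - br b (m a)) = 0"
      unfolding kS kS' alg_dbar by simp
    thus "\<kappa> (br a (J (m b)) - br b (J (m a))) = \<kappa> (- J (br a (m b) - br b (m a)))"
      by (simp add: algebra_simps)
  qed
  have S0: "br a (m b) - br b (m a) = 0" by (rule S_zero[OF lm ac H])
  have "2 * (of_real (\<alpha> b) * \<beta> a v + of_real (\<alpha> (J b)) * \<beta> a (J v)
     - of_real (\<alpha> a) * \<beta> b v - of_real (\<alpha> (J a)) * \<beta> b (J v)) = 0"
    using S0 kS[of a b] by simp
  moreover have "Bf b u * Bf a v - Bf a u * Bf b v = 0" using P by simp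
  hence "(of_real (\<alpha> b) + \<i> * of_real (\<alpha> (J b))) * (\<beta> a v - \<i> * \<beta> a (J v))
        - (of_real (\<alpha> a) + \<i> * of_real (\<alpha> (J a))) * (\<beta> b v - \<i> * \<beta> b (J v)) = 0"
    by (simp only: ua[of b] ua[of a] Bf_def[of a v] Bf_def[of b v])
  ultimately have "(of_real (\<alpha> b) - \<i> * of_real (\<alpha> (J b))) * (- \<beta> a v - \<i> * \<beta> a (J v))
     - (of_real (\<alpha> a) - \<i> * of_real (\<alpha> (J a))) * (- \<beta> b v - \<i> * \<beta> b (J v)) = 0"
    unfolding alg_S by simp
  moreover have "cnj (Bf x u) = of_real (\<alpha> x) - \<i> * of_real (\<alpha> (J x))" for x
    unfolding ua by simp
  ultimately show ?thesis unfolding Bf_swap[of v a] Bf_swap[of v b] by simp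
qed

lemma star: "cnj (Bf b w) * Bf w a = cnj (Bf a w) * Bf w b"
  by (rule L2) (simp add: mult.commute)

lemma H2: assumes Z: "\<forall>x. Bf x w = 0" shows "Bf w a = 0"
proof -
  have "cnj (Bf w a) * Bf w a = cnj (Bf a a) * Bf w w"
    by (rule L2) (simp add: Z)
  hence "cnj (Bf w a) * Bf w a = 0" using Z by simp
  thus ?thesis by simp
qed

lemma Bf_rdiff: "Bf a (x - y) = Bf a x - Bf a y" by (simp add: Bf_def \<beta>_def algebra_simps)
lemma Bf_ldiff: "Bf (x - y) a = Bf x a - Bf y a" by (simp add: Bf_def \<beta>_def algebra_simps)

lemma Qlem: "Bf v a * cnj (Bf c u) = Bf u c * cnj (Bf a v)"
proof (cases "\<forall>x. Bf x v = 0")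
  case True
  thus ?thesis using H2[OF True, of a] by simp
next
  case Fv: False
  show ?thesis
  proof (cases "\<forall>x. Bf x u = 0")
    case True
    thus ?thesis using H2[OF True, of c] by simp
  next
    case Fu: False
    from Fu obtain a0 where a0: "Bf a0 u \<noteq> 0" by blast
    from Fv obtain b0 where b0: "Bf b0 v \<noteq> 0" by blast
    define lu where "lu = Bf u a0 / cnj (Bf a0 u)"
    define lv where "lv = Bf v b0 / cnj (Bf b0 v)"
    have Yu: "Bf u x = lu * cnj (Bf x u)" for x
    proof -
      have "cnj (Bf a0 u) * Bf u x = cnj (Bf x u) * Bf u a0" by (rule star)
      thus ?thesis using a0 unfolding lu_def by (simp add: field_simps)
    qed
    have Yv: "Bf v x = lv * cnj (Bf x v)" for x
    proof -
      have "cnj (Bf b0 v) * Bf v x = cnj (Bf x v) * Bf v b0" by (rule star)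
      thus ?thesis using b0 unfolding lv_def by (simp add: field_simps)
    qed
    have luv: "lu = lv"
    proof (rule ccontr)
      assume ne: "lu \<noteq> lv"
      have cross: "cnj (Bf b u) * Bf v a + cnj (Bf b v) * Bf u a = cnj (Bf a u) * Bf v b + cnj (Bf a v) * Bf u b"
        for a b
      proof -
        have e1: "cnj (Bf b (u + v)) * Bf (u + v) a = cnj (Bf a (u + v)) * Bf (u + v) b" by (rule star)
        have e2: "cnj (Bf b u) * Bf u a = cnj (Bf a u) * Bf u b" by (rule star)
        have e3: "cnj (Bf b v) * Bf v a = cnj (Bf a v) * Bf v b" by (rule star)
        have "cnj (Bf b u) * Bf v a + cnj (Bf b v) * Bf u a - (cnj (Bf a u) * Bf v b + cnj (Bf a v) * Bf u b)
          = (cnj (Bf b (u + v)) * Bf (u + v) a - cnj (Bf a (u + v)) * Bf (u + v) b)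
            - (cnj (Bf b u) * Bf u a - cnj (Bf a u) * Bf u b) - (cnj (Bf b v) * Bf v a - cnj (Bf a v) * Bf v b)"
          unfolding Bf_radd Bf_ladd by (simp add: algebra_simps)
        also have "\<dots> = 0" using e1 e2 e3 by simp
        finally show ?thesis by simp
      qed
      have prod: "Bf b u * Bf a v = Bf a u * Bf b v" for a b
      proof -
        have "(lv - lu) * (cnj (Bf b u) * cnj (Bf a v) - cnj (Bf a u) * cnj (Bf b v)) = 0"
          using cross[of b a] unfolding Yu Yv by (simp add: algebra_simps)
        hence "cnj (Bf b u) * cnj (Bf a v) = cnj (Bf a u) * cnj (Bf b v)" using ne by simp
        hence "cnj (Bf b u * Bf a v) = cnj (Bf a u * Bf b v)" by simp
        thus ?thesis by (simp only: complex_cnj_cancel_iff)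
      qed
      define k where "k = Bf a0 v / Bf a0 u"
      have Xk: "Bf x v = k * Bf x u" for x
        using prod[of x a0] a0 unfolding k_def by (simp add: field_simps)
      define w where "w = v - Re k *\<^sub>R u - Im k *\<^sub>R J u"
      have kk: "k = of_real (Re k) + \<i> * of_real (Im k)" by (simp add: complex_eq_iff)
      have "Bf x w = Bf x v - k * Bf x u" for x
        unfolding w_def Bf_rdiff Bf_rscale Bf_rJ by (subst (3) kk) (simp add: algebra_simps)
      hence "\<forall>x. Bf x w = 0" using Xk by simp
      hence Hw: "Bf w b0 = 0" by (rule H2)
      have "Bf w b0 = Bf v b0 - cnj k * Bf u b0"
        unfolding w_def Bf_ldiff Bf_lscale Bf_Jl by (subst (3) kk) (simp add: algebra_simps)
      hence e: "Bf v b0 = cnj k * Bf u b0" using Hw by simp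
      have kn: "k \<noteq> 0" and un: "Bf b0 u \<noteq> 0" using Xk[of b0] b0 by auto
      have "lv * (cnj k * cnj (Bf b0 u)) = cnj k * (lu * cnj (Bf b0 u))"
        using e Yv[of b0] Yu[of b0] Xk[of b0] by simp
      hence "lv = lu" using kn un by simp
      thus False using ne by simp
    qed
    show ?thesis unfolding Yu Yv luv by (simp add: algebra_simps)
  qed
qed

lemma \<beta>_Bf: "\<beta> a v = (Bf a v - Bf v a) / 2"
  unfolding Bf_swap[of v a] by (simp add: Bf_def)

lemma Rlem: "Im (cnj (\<beta> a v) * \<beta> c u) = 0"
proof -
  define x where "x = Bf a v"
  define x' where "x' = Bf v a"
  define y where "y = Bf c u"
  define y' where "y' = Bf u c"
  have q1: "x' * cnj y = y' * cnj x" unfolding x_def x'_def y_def y'_def by (rule Qlem)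
  have q2: "x * cnj y = y' * cnj x'" unfolding x_def x'_def y_def y'_def by (rule Qlem)
  have q3: "x' * cnj y' = y * cnj x" unfolding x_def x'_def y_def y'_def by (rule Qlem)
  have q4: "x * cnj y' = y * cnj x'" unfolding x_def x'_def y_def y'_def by (rule Qlem)
  define Z where "Z = cnj (x - x') * (y - y')"
  have "cnj Z = x * cnj y - x * cnj y' - x' * cnj y + x' * cnj y'"
    unfolding Z_def by (simp add: algebra_simps)
  also have "\<dots> = Z" unfolding q1 q2 q3 q4 Z_def by (simp add: algebra_simps)
  finally have "Im (cnj Z) = Im Z" by simp
  hence "Im Z = 0" by simp
  moreover have eq: "cnj (\<beta> a v) * \<beta> c u = Z / 4"
    unfolding \<beta>_Bf Z_def x_def x'_def y_def y'_def by (simp add: field_simps)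
  ultimately show ?thesis unfolding eq by simp
qed

lemma key: "\<exists>z0\<in>lie_center br. z0 \<noteq> 0 \<and> (\<exists>\<omega>. \<forall>x y. br x y = \<omega> x y *\<^sub>R z0)"
proof (cases "\<forall>x y. br x y = 0")
  case True
  have "z \<noteq> 0" using lz by auto
  thus ?thesis using True zC by (intro bexI[of _ z]) (auto intro: exI[of _ "\<lambda>x y. 0"])
next
  case False
  then obtain a0 v0 where nz: "br a0 v0 \<noteq> 0" by blast
  define b0 where "b0 = \<beta> a0 v0"
  have b0: "b0 \<noteq> 0" using nz \<kappa>_inj[OF br_in_C] unfolding b0_def \<beta>_def by blast
  define \<omega> where "\<omega> x y = Re (\<beta> x y / b0)" for x y
  have "br x y = \<omega> x y *\<^sub>R br a0 v0" for x y
  proof (rule \<kappa>_eq)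
    show "br x y \<in> lie_center br" by (rule br_in_C)
    show "\<omega> x y *\<^sub>R br a0 v0 \<in> lie_center br" by (rule subspace_scale[OF subspace_C br_in_C])
    have "Im (\<beta> x y / b0) = 0"
      unfolding Im_complex_div_eq_0 using Rlem[of a0 v0 x y] unfolding b0_def by (simp add: mult.commute)
    hence "\<beta> x y / b0 = of_real (\<omega> x y)" unfolding \<omega>_def by (simp add: complex_eq_iff)
    hence "\<beta> x y = of_real (\<omega> x y) * b0" using b0 by (simp add: field_simps)
    thus "\<kappa> (br x y) = \<kappa> (\<omega> x y *\<^sub>R br a0 v0)" unfolding b0_def \<beta>_def by simp
  qed
  thus ?thesis using nz br_in_C by blast
qed

end

lemma indep_from_coeffs:
  fixes f :: "nat \<Rightarrow> 'a::real_vector"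
  assumes H: "\<And>c. (\<Sum>i<N. c i *\<^sub>R f i) = 0 \<Longrightarrow> \<forall>i<N. c i = 0"
  shows "inj_on f {..<N} \<and> independent (f ` {..<N})"
proof -
  have inj: "inj_on f {..<N}"
  proof (rule inj_onI, rule ccontr)
    fix i j assume i: "i \<in> {..<N}" and j: "j \<in> {..<N}" and e: "f i = f j" and ne: "i \<noteq> j"
    define c where "c k = (if k = i then 1 else if k = j then -1 else (0::real))" for k
    have "c k *\<^sub>R f k = (if k = i then f i else 0) + (if k = j then - f j else 0)" for k
      unfolding c_def using ne by auto
    hence "(\<Sum>k<N. c k *\<^sub>R f k) = (\<Sum>k<N. (if k = i then f i else 0)) + (\<Sum>k<N. (if k = j then - f j else 0))"
      by (simp add: sum.distrib)
    also have "\<dots> = f i - f j" using i j by (simp add: sum.delta)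
    also have "\<dots> = 0" using e by simp
    finally have "\<forall>k<N. c k = 0" by (rule H)
    thus False using i unfolding c_def by auto
  qed
  have "independent (f ` {..<N})"
  proof (rule independent_if_scalars_zero)
    show "finite (f ` {..<N})" by simp
    fix g x assume s: "(\<Sum>x\<in>f ` {..<N}. g x *\<^sub>R x) = 0" and x: "x \<in> f ` {..<N}"
    have "(\<Sum>x\<in>f ` {..<N}. g x *\<^sub>R x) = (\<Sum>k<N. g (f k) *\<^sub>R f k)"
      by (subst sum.reindex[OF inj]) (simp add: o_def)
    hence "(\<Sum>k<N. g (f k) *\<^sub>R f k) = 0" using s by simp
    hence "\<forall>k<N. g (f k) = 0" by (rule H)
    thus "g x = 0" using x by auto
  qed
  with inj show ?thesis by blast
qed

theorem theorem5p4:
  fixes br :: "'a::euclidean_space \<Rightarrow> 'a \<Rightarrow> 'a" and J :: "'a \<Rightarrow> 'a"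
  assumes "lie_algebra br"
    and "two_step_nilpotent br"
    and "rational_structure br"
    and "abelian_complex_structure br J"
    and "dim (lie_center br) = 2"
    and "\<forall>\<mu>. form01_10 J \<mu> \<and> dbar_closed br J \<mu> \<longrightarrow> generates_abelian_deformation br J \<mu>"
  shows "\<exists>n. DIM('a) = 2*n+2 \<and> iso_heis_plus_R br n"
proof -
  have bil: "bilinear br" and sk: "\<And>x y. br x y = - br y x" using assms(1) unfolding lie_algebra_def by blast+
  have nil2: "\<And>x y z. br x (br y z) = 0" using assms(2) unfolding two_step_nilpotent_def by blast
  have linJ: "linear J" and JJ: "\<And>a. J (J a) = - a" and brJJ: "\<And>a b. br (J a) (J b) = br a b"
    using assms(4) unfolding abelian_complex_structure_def by blast+
  interpret A: acs br J by (rule acs.intro[OF bil sk nil2 linJ JJ brJJ])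
  define C where "C = lie_center br"
  have dimC: "dim C = 2" using assms(5) unfolding C_def .
  have "\<not> C \<subseteq> {0}" using dimC dim_eq_0[of C] by auto
  then obtain z where zC: "z \<in> C" and z0: "z \<noteq> 0" by blast
  have JzC: "J z \<in> C" using A.J_C zC unfolding C_def by blast
  have Jz0: "J z \<noteq> 0"
  proof
    assume "J z = 0"
    hence "J (J z) = 0" by simp
    thus False using z0 by simp
  qed
  have zspan: "z \<notin> span {J z}"
  proof
    assume "z \<in> span {J z}"
    then obtain k where k: "z = k *\<^sub>R J z" by (auto simp: span_singleton)
    from k have "J z = J (k *\<^sub>R J z)" by (rule arg_cong)
    hence e1: "J z = - (k *\<^sub>R z)" by simp
    have e2: "z = k *\<^sub>R (- (k *\<^sub>R z))" by (rule k[unfolded e1])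
    have "z + (k * k) *\<^sub>R z = k *\<^sub>R (- (k *\<^sub>R z)) + (k * k) *\<^sub>R z"
      using e2 by (rule arg_cong[where f="\<lambda>t. t + (k * k) *\<^sub>R z"])
    also have "\<dots> = 0" by simp
    finally have "(1 + k * k) *\<^sub>R z = 0" by (simp add: algebra_simps)
    moreover have "1 + k * k \<noteq> 0"
    proof -
      have "0 \<le> k * k" by simp
      thus ?thesis by linarith
    qed
    ultimately show False using z0 by simp
  qed
  have ind: "independent {z, J z}"
    using zspan Jz0 z0 by (simp add: independent_insert span_base)
  have zne: "z \<noteq> J z" using zspan span_base by blast
  have Csp: "C \<subseteq> span {z, J z}"
  proof (rule card_ge_dim_independent)
    show "{z, J z} \<subseteq> C" using zC JzC by blast
    show "independent {z, J z}" by (rule ind)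
    show "dim C \<le> card {z, J z}" using dimC zne by simp
  qed
  obtain ell where lin: "linear ell" and ellv: "\<forall>x\<in>{z, J z}. ell x = (if x = z then 1 else (0::real))"
    using linear_independent_extend[OF ind, of "\<lambda>x. if x = z then 1 else (0::real)"] by blast
  have lz: "ell z = 1" and lJz: "ell (J z) = 0" using ellv zne by auto
  have decode: "x = ell x *\<^sub>R z - ell (J x) *\<^sub>R J z" if x: "x \<in> lie_center br" for x
  proof -
    have "x \<in> span (insert z {J z})" using Csp x unfolding C_def by auto
    then obtain k where "x - k *\<^sub>R z \<in> span {J z}" by (auto simp: span_insert)
    then obtain t where t: "x - k *\<^sub>R z = t *\<^sub>R J z" by (auto simp: span_singleton)
    hence xe: "x = k *\<^sub>R z + t *\<^sub>R J z" by (simp add: algebra_simps)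
    have "ell x = k" unfolding xe using lz lJz by (simp add: linear_add[OF lin] linear_scale[OF lin])
    moreover have "ell (J x) = - t" unfolding xe using lz lJz JJ
      by (simp add: linear_add[OF lin] linear_scale[OF lin] linear_neg[OF lin] linear_diff[OF lin] A.J_simps)
    ultimately show ?thesis using xe by simp
  qed
  interpret B: acs2 br J ell z
  proof -
    have zC': "z \<in> lie_center br" using zC unfolding C_def .
    show "acs2 br J ell z"
      by (rule acs2.intro[OF A.acs_axioms acs2_axioms.intro[OF lin zC' lz lJz decode assms(6)]])
  qed
  obtain z0 \<omega>0 where z0C: "z0 \<in> C" and z0n: "z0 \<noteq> 0" and om0: "\<And>x y. br x y = \<omega>0 x y *\<^sub>R z0"
    using B.key unfolding C_def by blast
  define \<omega> where "\<omega> x y = inner (br x y) z0 / inner z0 z0" for x y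
  have zz: "inner z0 z0 \<noteq> 0" using z0n by simp
  have brom: "br x y = \<omega> x y *\<^sub>R z0" for x y
    using om0[of x y] zz unfolding \<omega>_def by simp
  have bilo: "bilinear \<omega>"
    unfolding bilinear_def linear_iff \<omega>_def by (simp add: inner_add_left add_divide_distrib)
  have sko: "\<omega> x y = - \<omega> y x" for x y unfolding \<omega>_def using sk[of x y] by simp
  have Rdef: "{x. \<forall>y. \<omega> x y = 0} = C"
  proof -
    have "(\<forall>y. \<omega> x y = 0) \<longleftrightarrow> (\<forall>y. br x y = 0)" for x using brom z0n by auto
    thus ?thesis unfolding C_def lie_center_def by auto
  qed
  have "\<exists>n b. (\<forall>i<2*n. b i \<in> (UNIV::'a set)) \<and> UNIV \<subseteq> span (b ` {..<2*n} \<union> {x. \<forall>y. \<omega> x y = 0})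
        \<and> (\<forall>i<2*n. \<forall>j<2*n. \<omega> (b i) (b j) = sgnf n i j)"
  proof (rule darboux[OF bilo sko])
    show "subspace (UNIV :: 'a set)" by (rule subspace_UNIV)
    show "{x. \<forall>y. \<omega> x y = 0} \<subseteq> UNIV" by (rule subset_UNIV)
    show "\<forall>x\<in>UNIV. (\<forall>y\<in>UNIV. \<omega> x y = 0) \<longrightarrow> (\<forall>y. \<omega> x y = 0)" by blast
  qed
  then obtain n b where bsp: "UNIV \<subseteq> span (b ` {..<2*n} \<union> {x. \<forall>y. \<omega> x y = 0})"
    and bom: "\<forall>i<2*n. \<forall>j<2*n. \<omega> (b i) (b j) = sgnf n i j"
    by blast
  have "\<exists>w\<in>C. w \<notin> span {z0}"
  proof (rule ccontr)
    assume "\<not> ?thesis"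
    hence "C \<subseteq> span {z0}" by auto
    hence "dim C \<le> card {z0}" by (intro dim_le_card) auto
    thus False using dimC by simp
  qed
  then obtain w where wC: "w \<in> C" and wsp: "w \<notin> span {z0}" by blast
  have ind2: "independent {w, z0}" using wsp z0n by (simp add: independent_insert span_base)
  have wz: "w \<noteq> z0" using wsp span_base by blast
  have Csp2: "C \<subseteq> span {w, z0}"
  proof (rule card_ge_dim_independent)
    show "{w, z0} \<subseteq> C" using wC z0C by blast
    show "independent {w, z0}" by (rule ind2)
    show "dim C \<le> card {w, z0}" using dimC wz by simp
  qed
  define bb where "bb i = (if i < 2*n then b i else if i = 2*n then z0 else w)" for i
  have bbC: "bb i \<in> C" if "\<not> i < 2*n" for i using that z0C wC unfolding bb_def by auto
  have cent: "br c y = 0" if "c \<in> C" for c y using that unfolding C_def lie_center_def by auto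
  have omC: "\<omega> c y = 0" if "c \<in> C" for c y using that Rdef by auto
  have lin1: "linear (\<lambda>x. \<omega> x y)" for y using bilo unfolding bilinear_def by auto
  have coeff: "\<forall>i<2*n+2. c i = 0" if s: "(\<Sum>i<2*n+2. c i *\<^sub>R bb i) = 0" for c
  proof -
    have om_bb: "\<omega> (bb i) (b k) = (if i < 2*n then sgnf n i k else 0)" if "k < 2*n" for i k
      using bom that omC[OF bbC] unfolding bb_def by auto
    have key: "(\<Sum>i<2*n. c i * sgnf n i k) = 0" if k: "k < 2*n" for k
    proof -
      have "0 = \<omega> (\<Sum>i<2*n+2. c i *\<^sub>R bb i) (b k)" using s omC[of 0] subspace_0[OF A.subspace_C]
        unfolding C_def by simp
      also have "\<dots> = (\<Sum>i<2*n+2. \<omega> (c i *\<^sub>R bb i) (b k))"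
        by (rule linear_sum[OF lin1[of "b k"], where g="\<lambda>i. c i *\<^sub>R bb i" and S="{..<2*n+2}"])
      also have "\<dots> = (\<Sum>i<2*n+2. c i * \<omega> (bb i) (b k))"
        by (rule sum.cong) (simp_all add: linear_scale[OF lin1[of "b k"]])
      also have "\<dots> = (\<Sum>i<2*n+2. c i * (if i < 2*n then sgnf n i k else 0))"
        using om_bb[OF k] by simp
      also have "\<dots> = (\<Sum>i<2*n. c i * sgnf n i k)"
        by (simp add: numeral_2_eq_2)
      finally show ?thesis by simp
    qed
    have low: "c i = 0" if i: "i < 2*n" for i
    proof (cases "i < n")
      case True
      have "(\<Sum>j<2*n. c j * sgnf n j (n + i)) = (\<Sum>j<2*n. if j = i then c i else 0)"
        by (rule sum.cong) (use True in \<open>auto simp: sgnf_def\<close>)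
      thus ?thesis using key[of "n + i"] True i by simp
    next
      case False
      have "(\<Sum>j<2*n. c j * sgnf n j (i - n)) = (\<Sum>j<2*n. if j = i then - c i else 0)"
        by (rule sum.cong) (use False i in \<open>auto simp: sgnf_def\<close>)
      thus ?thesis using key[of "i - n"] False i by simp
    qed
    have "(\<Sum>i<2*n+2. c i *\<^sub>R bb i) = (\<Sum>i<2*n. c i *\<^sub>R bb i) + c (2*n) *\<^sub>R z0 + c (2*n+1) *\<^sub>R w"
      by (simp add: numeral_2_eq_2 bb_def)
    also have "(\<Sum>i<2*n. c i *\<^sub>R bb i) = 0" using low by simp
    finally have lin2: "c (2*n) *\<^sub>R z0 + c (2*n+1) *\<^sub>R w = 0" using s by simp
    have c1: "c (2*n+1) = 0"
    proof (rule ccontr)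
      assume ne: "c (2*n+1) \<noteq> 0"
      have e: "c (2*n+1) *\<^sub>R w = - (c (2*n) *\<^sub>R z0)" using lin2 by (simp add: eq_neg_iff_add_eq_0 add.commute)
      have "w = (1 / c (2*n+1)) *\<^sub>R (c (2*n+1) *\<^sub>R w)" using ne by simp
      also have "\<dots> = (1 / c (2*n+1)) *\<^sub>R (- (c (2*n) *\<^sub>R z0))" unfolding e ..
      finally have "w = (1 / c (2*n+1)) *\<^sub>R (- (c (2*n) *\<^sub>R z0))" .
      moreover have "(1 / c (2*n+1)) *\<^sub>R (- (c (2*n) *\<^sub>R z0)) \<in> span {z0}"
        by (intro span_scale span_neg span_base) simp
      ultimately have "w \<in> span {z0}" by simp
      thus False using wsp by simp
    qed
    have c0: "c (2*n) = 0" using lin2 c1 z0n by simp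
    show ?thesis
    proof (intro allI impI)
      fix i assume "i < 2*n+2"
      hence "i < 2*n \<or> i = 2*n \<or> i = 2*n+1" by auto
      thus "c i = 0" using low c0 c1 by auto
    qed
  qed
  have ii: "inj_on bb {..<2*n+2} \<and> independent (bb ` {..<2*n+2})"
    by (rule indep_from_coeffs) (rule coeff)
  have sp1: "b ` {..<2*n} \<union> {x. \<forall>y. \<omega> x y = 0} \<subseteq> span (bb ` {..<2*n+2})"
  proof -
    have "b ` {..<2*n} \<subseteq> bb ` {..<2*n+2}" unfolding bb_def by (auto intro!: image_eqI)
    moreover have "z0 \<in> bb ` {..<2*n+2}" unfolding bb_def by (auto intro!: image_eqI[of _ _ "2*n"])
    moreover have "w \<in> bb ` {..<2*n+2}" unfolding bb_def by (auto intro!: image_eqI[of _ _ "2*n+1"])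
    ultimately have "{w, z0} \<subseteq> span (bb ` {..<2*n+2})" "b ` {..<2*n} \<subseteq> span (bb ` {..<2*n+2})"
      using span_superset[of "bb ` {..<2*n+2}"] by blast+
    hence "span {w, z0} \<subseteq> span (bb ` {..<2*n+2})" "b ` {..<2*n} \<subseteq> span (bb ` {..<2*n+2})"
      using span_minimal[OF _ subspace_span] by blast+
    thus ?thesis using Csp2 Rdef by auto
  qed
  have spanU: "span (bb ` {..<2*n+2}) = UNIV"
    using bsp span_minimal[OF sp1 subspace_span] by auto
  have "card (bb ` {..<2*n+2}) = dim (UNIV :: 'a set)"
    by (rule basis_card_eq_dim) (use ii spanU in auto)
  hence DIM: "DIM('a) = 2*n+2" using ii card_image[of bb "{..<2*n+2}"] by simp
  have brb: "br (bb i) (bb j) = (if i < n \<and> j = n + i then bb (2*n)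
           else if j < n \<and> i = n + j then - bb (2*n) else 0)" if i: "i < 2*n+2" and j: "j < 2*n+2" for i j
  proof (cases "i < 2*n \<and> j < 2*n")
    case True
    hence "br (bb i) (bb j) = sgnf n i j *\<^sub>R z0" using brom bom unfolding bb_def by auto
    thus ?thesis unfolding sgnf_def bb_def by auto
  next
    case False
    have "br (bb i) (bb j) = 0"
    proof (cases "i < 2*n")
      case False2: False
      show ?thesis using cent[OF bbC[OF False2]] by simp
    next
      case True
      hence nj: "\<not> j < 2*n" using False by simp
      show ?thesis using cent[OF bbC[OF nj], of "bb i"] sk[of "bb i" "bb j"] by simp
    qed
    thus ?thesis using False by auto
  qed
  have "iso_heis_plus_R br n"
    unfolding iso_heis_plus_R_def using ii spanU brb by blast
  thus ?thesis using DIM by blast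
qed

end
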